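(* If a uniform preorder $(A,R)$ is cartesian, then $D(A,R)$ is cartesian, the singleton map $\eta:(A,R)\to D(A,R)$, $a\mapsto\{a\}$, is a cartesian morphism, and $\mathsf{fam}(D(A,R))$ is an indexed frame.
   Context: A uniform preorder is a pair $(A,R)$ with $A$ a set and $R\subseteq P(A\times A)$ such that $\mathrm{id}_A\in R$, $s\circ r\in R$ whenever $r,s\in R$, and $s\in R$ whenever $r\in R$ and $s\subseteq r$. A monotone map $f:(A,R)\to(B,S)$ is a function with $\{(fa,fa')\mid(a,a')\in r\}\in S$ for all $r\in R$; for monotone $f,g$, $f\le g$ iff $\{(fa,ga)\mid a\in A\}\in S$. This gives a locally ordered category $\mathsf{UOrd}$ with finite 2-products (terminal: a singleton; product $(A\times B,R\otimes S)$ where $R\otimes S$ consists of relations contained in some $r\times s$, $r\in R,s\in S$). Adjunction $f\dashv g$ means $\mathrm{id}\le g\circ f$ and $f\circ g\le\mathrm{id}$. An object is cartesian if the terminal projection and diagonal have right adjoints $\top:1\to A$ and $\wedge:A\times A\to A$; a morphism $f$ between cartesian objects is cartesian if $f\circ\wedge\cong\wedge\circ(f\times f)$ and $f\circ\top\cong\top$. $D(A,R)=(PA,DR)$ with $PA$ the powerset and $DR$ the relations on $PA$ contained in some $[r]=\{(U,V)\mid\forall a\in U\,\exists b\in V.\,(a,b)\in r\}$, $r\in R$. $\mathsf{fam}(A,R)$ is the indexed preorder (pseudofunctor $\mathsf{Set}^{op}\to\mathsf{Ord}$) $I\mapsto(A^I,\le)$ with $\varphi\le\psi$ iff $\{(\varphi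 i,\psi i)\mid i\in I\}\in R$, reindexing by precomposition. An indexed frame is an indexed preorder $\mathcal{H}$ whose fibers have finite meets preserved by reindexing, which has existential quantification (left adjoints $\exists_u\dashv u^*$ satisfying the Beck–Chevalley condition for pullbacks in $\mathsf{Set}$), and which satisfies Frobenius: $\varphi\wedge\exists_u\psi\cong\exists_u(u^*\varphi\wedge\psi)$ for all $u:J\to I$, $\varphi\in\mathcal{H}(I)$, $\psi\in\mathcal{H}(J)$. *)

theory Defs
  imports Main
begin

text \<open>A uniform preorder is a carrier set A together with a set R of relations on A.
  Relation composition s \<circ> r (first r, then s) is written r O s in HOL.\<close>

definition uniform_preorder :: "'a set \<Rightarrow> ('a \<times> 'a) set set \<Rightarrow> bool" where
  "uniform_preorder A R \<longleftrightarrow>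
     R \<subseteq> Pow (A \<times> A) \<and> Id_on A \<in> R \<and>
     (\<forall>r\<in>R. \<forall>s\<in>R. r O s \<in> R) \<and>
     (\<forall>r\<in>R. \<forall>s. s \<subseteq> r \<longrightarrow> s \<in> R)"

definition monotone_map :: "'a set \<Rightarrow> ('a \<times> 'a) set set \<Rightarrow> 'b set \<Rightarrow> ('b \<times> 'b) set set \<Rightarrow> ('a \<Rightarrow> 'b) \<Rightarrow> bool" where
  "monotone_map A R B S f \<longleftrightarrow>
     (\<forall>a\<in>A. f a \<in> B) \<and> (\<forall>r\<in>R. {(f a, f a') | a a'. (a, a') \<in> r} \<in> S)"

definition map_le :: "'a set \<Rightarrow> ('b \<times> 'b) set set \<Rightarrow> ('a \<Rightarrow> 'b) \<Rightarrow> ('a \<Rightarrow> 'b) \<Rightarrow> bool" where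
  "map_le A S f g \<longleftrightarrow> {(f a, g a) | a. a \<in> A} \<in> S"

definition map_iso :: "'a set \<Rightarrow> ('b \<times> 'b) set set \<Rightarrow> ('a \<Rightarrow> 'b) \<Rightarrow> ('a \<Rightarrow> 'b) \<Rightarrow> bool" where
  "map_iso A S f g \<longleftrightarrow> map_le A S f g \<and> map_le A S g f"

definition adjunction :: "'a set \<Rightarrow> ('a \<times> 'a) set set \<Rightarrow> 'b set \<Rightarrow> ('b \<times> 'b) set set
     \<Rightarrow> ('a \<Rightarrow> 'b) \<Rightarrow> ('b \<Rightarrow> 'a) \<Rightarrow> bool" where
  "adjunction A R B S f g \<longleftrightarrow>
     monotone_map A R B S f \<and> monotone_map B S A R g \<and>
     map_le A R (\<lambda>a. a) (g \<circ> f) \<and> map_le B S (f \<circ> g) (\<lambda>b. b)"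

definition one_set :: "unit set" where "one_set = {()}"
definition one_rel :: "(unit \<times> unit) set set" where "one_rel = Pow {((), ())}"

definition rel_times :: "('a \<times> 'a) set \<Rightarrow> ('b \<times> 'b) set \<Rightarrow> (('a \<times> 'b) \<times> ('a \<times> 'b)) set" where
  "rel_times r s = {((a, b), (a', b')) | a b a' b'. (a, a') \<in> r \<and> (b, b') \<in> s}"

definition prod_rel :: "('a \<times> 'a) set set \<Rightarrow> ('b \<times> 'b) set set \<Rightarrow> (('a \<times> 'b) \<times> ('a \<times> 'b)) set set" where
  "prod_rel R S = {t. \<exists>r\<in>R. \<exists>s\<in>S. t \<subseteq> rel_times r s}"

definition cartesian_with :: "'a set \<Rightarrow> ('a \<times> 'a) set set \<Rightarrow> (unit \<Rightarrow> 'a) \<Rightarrow> ('a \<times> 'a \<Rightarrow> 'a) \<Rightarrow> bool" where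
  "cartesian_with A R tp mt \<longleftrightarrow>
     adjunction A R one_set one_rel (\<lambda>_. ()) tp \<and>
     adjunction A R (A \<times> A) (prod_rel R R) (\<lambda>a. (a, a)) mt"

definition cartesian :: "'a set \<Rightarrow> ('a \<times> 'a) set set \<Rightarrow> bool" where
  "cartesian A R \<longleftrightarrow> uniform_preorder A R \<and> (\<exists>tp mt. cartesian_with A R tp mt)"

text \<open>Cartesian morphism (right adjoints are unique up to isomorphism, so we require
  the conditions for all choices of them).\<close>
definition cartesian_mor :: "'a set \<Rightarrow> ('a \<times> 'a) set set \<Rightarrow> 'b set \<Rightarrow> ('b \<times> 'b) set set \<Rightarrow> ('a \<Rightarrow> 'b) \<Rightarrow> bool" where
  "cartesian_mor A R B S f \<longleftrightarrow>
     cartesian A R \<and> cartesian B S \<and> monotone_map A R B S f \<and>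
     (\<forall>tA mA tB mB. cartesian_with A R tA mA \<and> cartesian_with B S tB mB \<longrightarrow>
        map_iso (A \<times> A) S (f \<circ> mA) (mB \<circ> map_prod f f) \<and>
        map_iso one_set S (f \<circ> tA) tB)"

definition lift_rel :: "'a set \<Rightarrow> ('a \<times> 'a) set \<Rightarrow> ('a set \<times> 'a set) set" where
  "lift_rel A r = {(U, V). U \<subseteq> A \<and> V \<subseteq> A \<and> (\<forall>a\<in>U. \<exists>b\<in>V. (a, b) \<in> r)}"

definition DR :: "'a set \<Rightarrow> ('a \<times> 'a) set set \<Rightarrow> ('a set \<times> 'a set) set set" where
  "DR A R = {t. \<exists>r\<in>R. t \<subseteq> lift_rel A r}"

text \<open>Fiber over an index set I: families I \<rightarrow> B; order as in the paper; reindexing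
  along u : J \<rightarrow> I is precomposition \<phi> \<circ> u.\<close>
definition fam_el :: "'b set \<Rightarrow> 'i set \<Rightarrow> ('i \<Rightarrow> 'b) \<Rightarrow> bool" where
  "fam_el B I \<phi> \<longleftrightarrow> (\<forall>i\<in>I. \<phi> i \<in> B)"

definition fam_le :: "('b \<times> 'b) set set \<Rightarrow> 'i set \<Rightarrow> ('i \<Rightarrow> 'b) \<Rightarrow> ('i \<Rightarrow> 'b) \<Rightarrow> bool" where
  "fam_le S I \<phi> \<psi> \<longleftrightarrow> {(\<phi> i, \<psi> i) | i. i \<in> I} \<in> S"

definition fam_iso :: "('b \<times> 'b) set set \<Rightarrow> 'i set \<Rightarrow> ('i \<Rightarrow> 'b) \<Rightarrow> ('i \<Rightarrow> 'b) \<Rightarrow> bool" where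
  "fam_iso S I \<phi> \<psi> \<longleftrightarrow> fam_le S I \<phi> \<psi> \<and> fam_le S I \<psi> \<phi>"

definition maps_into :: "('j \<Rightarrow> 'i) \<Rightarrow> 'j set \<Rightarrow> 'i set \<Rightarrow> bool" where
  "maps_into u J I \<longleftrightarrow> (\<forall>j\<in>J. u j \<in> I)"

definition is_fam_top :: "'b set \<Rightarrow> ('b \<times> 'b) set set \<Rightarrow> 'i set \<Rightarrow> ('i \<Rightarrow> 'b) \<Rightarrow> bool" where
  "is_fam_top B S I t \<longleftrightarrow> fam_el B I t \<and> (\<forall>\<phi>. fam_el B I \<phi> \<longrightarrow> fam_le S I \<phi> t)"

definition is_fam_meet :: "'b set \<Rightarrow> ('b \<times> 'b) set set \<Rightarrow> 'i set \<Rightarrow> ('i \<Rightarrow> 'b) \<Rightarrow> ('i \<Rightarrow> 'b) \<Rightarrow> ('i \<Rightarrow> 'b) \<Rightarrow> bool" where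
  "is_fam_meet B S I \<phi> \<psi> m \<longleftrightarrow>
     fam_el B I m \<and> fam_le S I m \<phi> \<and> fam_le S I m \<psi> \<and>
     (\<forall>\<chi>. fam_el B I \<chi> \<and> fam_le S I \<chi> \<phi> \<and> fam_le S I \<chi> \<psi> \<longrightarrow> fam_le S I \<chi> m)"

definition is_fam_exists :: "'b set \<Rightarrow> ('b \<times> 'b) set set \<Rightarrow> 'j set \<Rightarrow> 'i set \<Rightarrow> ('j \<Rightarrow> 'i)
     \<Rightarrow> ('j \<Rightarrow> 'b) \<Rightarrow> ('i \<Rightarrow> 'b) \<Rightarrow> bool" where
  "is_fam_exists B S J I u \<psi> e \<longleftrightarrow>
     fam_el B I e \<and> (\<forall>\<phi>. fam_el B I \<phi> \<longrightarrow> (fam_le S I e \<phi> \<longleftrightarrow> fam_le S J \<psi> (\<phi> \<circ> u)))"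

text \<open>fam(B,S) is an indexed frame; index sets range over sets of the (arbitrary)
  types 'i, 'j, 'k, 'p.\<close>
definition fam_indexed_frame :: "'b set \<Rightarrow> ('b \<times> 'b) set set
     \<Rightarrow> 'i itself \<Rightarrow> 'j itself \<Rightarrow> 'k itself \<Rightarrow> 'p itself \<Rightarrow> bool" where
  "fam_indexed_frame B S (_::'i itself) (_::'j itself) (_::'k itself) (_::'p itself) \<longleftrightarrow>
     \<comment> \<open>fibers have finite meets\<close>
     (\<forall>I::'i set. (\<exists>t. is_fam_top B S I t) \<and>
        (\<forall>\<phi> \<psi>. fam_el B I \<phi> \<and> fam_el B I \<psi> \<longrightarrow> (\<exists>m. is_fam_meet B S I \<phi> \<psi> m))) \<and>
     \<comment> \<open>finite meets are preserved by reindexing\<close>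
     (\<forall>(I::'i set) (J::'j set) u. maps_into u J I \<longrightarrow>
        (\<forall>t. is_fam_top B S I t \<longrightarrow> is_fam_top B S J (t \<circ> u)) \<and>
        (\<forall>\<phi> \<psi> m. fam_el B I \<phi> \<and> fam_el B I \<psi> \<and> is_fam_meet B S I \<phi> \<psi> m \<longrightarrow>
            is_fam_meet B S J (\<phi> \<circ> u) (\<psi> \<circ> u) (m \<circ> u))) \<and>
     \<comment> \<open>existential quantification: left adjoints to reindexing\<close>
     (\<forall>(I::'i set) (J::'j set) u \<psi>. maps_into u J I \<and> fam_el B J \<psi> \<longrightarrow>
        (\<exists>e. is_fam_exists B S J I u \<psi> e)) \<and>
     \<comment> \<open>Beck-Chevalley for every pullback square P \<rightarrow> J, P \<rightarrow> K over u : J \<rightarrow> I, v : K \<rightarrow> I\<close>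
     (\<forall>(I::'i set) (J::'j set) (K::'k set) (P::'p set) u v p q.
        maps_into u J I \<and> maps_into v K I \<and> maps_into p P J \<and> maps_into q P K \<and>
        (\<forall>x\<in>P. u (p x) = v (q x)) \<and>
        bij_betw (\<lambda>x. (p x, q x)) P {(j, k). j \<in> J \<and> k \<in> K \<and> u j = v k} \<longrightarrow>
        (\<forall>\<psi> e e'. fam_el B J \<psi> \<and> is_fam_exists B S J I u \<psi> e \<and>
            is_fam_exists B S P K q (\<psi> \<circ> p) e' \<longrightarrow> fam_iso S K (e \<circ> v) e')) \<and>
     \<comment> \<open>Frobenius\<close>
     (\<forall>(I::'i set) (J::'j set) u \<phi> \<psi> e m m' e'.
        maps_into u J I \<and> fam_el B I \<phi> \<and> fam_el B J \<psi> \<and>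
        is_fam_exists B S J I u \<psi> e \<and> is_fam_meet B S I \<phi> e m \<and>
        is_fam_meet B S J (\<phi> \<circ> u) \<psi> m' \<and> is_fam_exists B S J I u m' e' \<longrightarrow>
        fam_iso S I m e')"

end

theory Submission imports Defs begin
lemma up_sub: "uniform_preorder A R \<Longrightarrow> r \<in> R \<Longrightarrow> s \<subseteq> r \<Longrightarrow> s \<in> R"
  unfolding uniform_preorder_def by (elim conjE) (drule bspec, assumption, simp)
lemma up_comp: "uniform_preorder A R \<Longrightarrow> r \<in> R \<Longrightarrow> s \<in> R \<Longrightarrow> t \<subseteq> r O s \<Longrightarrow> t \<in> R"
proof -
  assume a: "uniform_preorder A R" "r \<in> R" "s \<in> R" "t \<subseteq> r O s"
  then have "r O s \<in> R" unfolding uniform_preorder_def by simp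
  then show ?thesis using up_sub a by metis
qed
lemma up_Id: "uniform_preorder A R \<Longrightarrow> Id_on A \<in> R"
  unfolding uniform_preorder_def by simp
lemma up_sub2: "uniform_preorder A R \<Longrightarrow> r \<in> R \<Longrightarrow> r \<subseteq> A \<times> A"
  unfolding uniform_preorder_def by auto
lemma cw_props:
  assumes up: "uniform_preorder B S" and cw: "cartesian_with B S tp mt"
  shows cw_tp: "tp () \<in> B"
    and cw_top: "{(a, tp ()) | a. a \<in> B} \<in> S"
    and cw_mt: "\<And>a b. a\<in>B \<Longrightarrow> b\<in>B \<Longrightarrow> mt (a,b) \<in> B"
    and cw_unit: "{(a, mt (a,a)) | a. a \<in> B} \<in> S"
    and cw_c1: "{(mt (a,b), a) | a b. a\<in>B \<and> b\<in>B} \<in> S"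
    and cw_c2: "{(mt (a,b), b) | a b. a\<in>B \<and> b\<in>B} \<in> S"
    and cw_mono: "\<And>r1 r2. r1\<in>S \<Longrightarrow> r2\<in>S \<Longrightarrow> {(mt (a,b), mt (a',b')) | a b a' b'. (a,a')\<in>r1 \<and> (b,b')\<in>r2} \<in> S"
proof -
  have D1: "adjunction B S one_set one_rel (\<lambda>_. ()) tp" and D2: "adjunction B S (B \<times> B) (prod_rel S S) (\<lambda>a. (a, a)) mt"
    using cw unfolding cartesian_with_def by auto
  from D1 have tpm: "monotone_map one_set one_rel B S tp" and tpu: "map_le B S (\<lambda>a. a) (tp \<circ> (\<lambda>_. ()))"
    unfolding adjunction_def by auto
  from D2 have mtm: "monotone_map (B \<times> B) (prod_rel S S) B S mt" and mtu: "map_le B S (\<lambda>a. a) (mt \<circ> (\<lambda>a. (a, a)))"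
    and mtc: "map_le (B \<times> B) (prod_rel S S) ((\<lambda>a. (a, a)) \<circ> mt) (\<lambda>b. b)"
    unfolding adjunction_def by auto
  show "tp () \<in> B" using tpm unfolding monotone_map_def one_set_def by simp
  show "{(a, tp ()) | a. a \<in> B} \<in> S" using tpu unfolding map_le_def by simp
  show "\<And>a b. a\<in>B \<Longrightarrow> b\<in>B \<Longrightarrow> mt (a,b) \<in> B" using mtm unfolding monotone_map_def by simp
  show "{(a, mt (a,a)) | a. a \<in> B} \<in> S" using mtu unfolding map_le_def by simp
  from mtc have "{(((\<lambda>a. (a,a)) \<circ> mt) p, p) | p. p \<in> B \<times> B} \<in> prod_rel S S" unfolding map_le_def by simp
  then obtain r s where rs: "r \<in> S" "s \<in> S" "{(((\<lambda>a. (a,a)) \<circ> mt) p, p) | p. p \<in> B \<times> B} \<subseteq> rel_times r s"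
    unfolding prod_rel_def by blast
  have "{(mt (a,b), a) | a b. a\<in>B \<and> b\<in>B} \<subseteq> r"
  proof
    fix x assume "x \<in> {(mt (a,b), a) | a b. a\<in>B \<and> b\<in>B}"
    then obtain a b where x: "x = (mt (a,b), a)" "a \<in> B" "b \<in> B" by blast
    then have "((mt (a,b), mt (a,b)), (a,b)) \<in> rel_times r s" using rs(3) by auto
    then show "x \<in> r" using x unfolding rel_times_def by auto
  qed
  then show "{(mt (a,b), a) | a b. a\<in>B \<and> b\<in>B} \<in> S" using up_sub[OF up rs(1)] by blast
  have "{(mt (a,b), b) | a b. a\<in>B \<and> b\<in>B} \<subseteq> s"
  proof
    fix x assume "x \<in> {(mt (a,b), b) | a b. a\<in>B \<and> b\<in>B}"
    then obtain a b where x: "x = (mt (a,b), b)" "a \<in> B" "b \<in> B" by blast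
    then have "((mt (a,b), mt (a,b)), (a,b)) \<in> rel_times r s" using rs(3) by auto
    then show "x \<in> s" using x unfolding rel_times_def by auto
  qed
  then show "{(mt (a,b), b) | a b. a\<in>B \<and> b\<in>B} \<in> S" using up_sub[OF up rs(2)] by blast
  fix r1 r2 assume r: "r1 \<in> S" "r2 \<in> S"
  have "rel_times r1 r2 \<in> prod_rel S S" unfolding prod_rel_def using r by blast
  with mtm have "{(mt p, mt p') | p p'. (p, p') \<in> rel_times r1 r2} \<in> S" unfolding monotone_map_def by blast
  moreover have "{(mt (a,b), mt (a',b')) | a b a' b'. (a,a')\<in>r1 \<and> (b,b')\<in>r2} = {(mt p, mt p') | p p'. (p, p') \<in> rel_times r1 r2}"
    unfolding rel_times_def by blast
  ultimately show "{(mt (a,b), mt (a',b')) | a b a' b'. (a,a')\<in>r1 \<and> (b,b')\<in>r2} \<in> S" by simp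
qed


lemma DR_I:
  assumes "r \<in> R" and h: "\<And>U V. (U,V) \<in> t \<Longrightarrow> U \<subseteq> A \<and> V \<subseteq> A \<and> (\<forall>a\<in>U. \<exists>b\<in>V. (a,b) \<in> r)"
  shows "t \<in> DR A R"
proof -
  have "t \<subseteq> lift_rel A r"
  proof
    fix x assume "x \<in> t"
    moreover obtain U V where "x = (U,V)" by (cases x)
    ultimately show "x \<in> lift_rel A r" using h unfolding lift_rel_def by auto
  qed
  then show ?thesis unfolding DR_def using assms(1) by blast
qed

lemma DR_E:
  assumes "t \<in> DR A R"
  shows "\<exists>r\<in>R. \<forall>U V. (U,V) \<in> t \<longrightarrow> U \<subseteq> A \<and> V \<subseteq> A \<and> (\<forall>a\<in>U. \<exists>b\<in>V. (a,b) \<in> r)"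
  using assms unfolding DR_def lift_rel_def by blast

lemma DR_sub: "t \<in> DR A R \<Longrightarrow> s \<subseteq> t \<Longrightarrow> s \<in> DR A R"
  unfolding DR_def by blast

lemma DR_comp:
  assumes up: "uniform_preorder A R" and t1: "t1 \<in> DR A R" and t2: "t2 \<in> DR A R" and s: "s \<subseteq> t1 O t2"
  shows "s \<in> DR A R"
proof -
  obtain r1 where r1: "r1 \<in> R" "\<And>U V. (U,V) \<in> t1 \<Longrightarrow> U \<subseteq> A \<and> V \<subseteq> A \<and> (\<forall>a\<in>U. \<exists>b\<in>V. (a,b) \<in> r1)"
    using DR_E[OF t1] by blast
  obtain r2 where r2: "r2 \<in> R" "\<And>U V. (U,V) \<in> t2 \<Longrightarrow> U \<subseteq> A \<and> V \<subseteq> A \<and> (\<forall>a\<in>U. \<exists>b\<in>V. (a,b) \<in> r2)"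
    using DR_E[OF t2] by blast
  have "r1 O r2 \<in> R" using up_comp[OF up r1(1) r2(1)] by simp
  then show ?thesis
  proof (rule DR_I)
    fix U V assume "(U,V) \<in> s"
    then obtain W where W: "(U,W) \<in> t1" "(W,V) \<in> t2" using s by blast
    show "U \<subseteq> A \<and> V \<subseteq> A \<and> (\<forall>a\<in>U. \<exists>b\<in>V. (a,b) \<in> r1 O r2)"
      using r1(2)[OF W(1)] r2(2)[OF W(2)] by blast
  qed
qed

lemma DR_Id: "uniform_preorder A R \<Longrightarrow> (\<And>U V. (U,V) \<in> t \<Longrightarrow> U \<subseteq> V \<and> V \<subseteq> A) \<Longrightarrow> t \<in> DR A R"
  by (rule DR_I[OF up_Id]) (auto, blast)

lemma DR_refl: "uniform_preorder A R \<Longrightarrow> Id_on (Pow A) \<in> DR A R"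
  by (rule DR_Id) auto

lemma up_D: assumes up: "uniform_preorder A R" shows "uniform_preorder (Pow A) (DR A R)"
proof -
  have "DR A R \<subseteq> Pow (Pow A \<times> Pow A)"
  proof
    fix t assume "t \<in> DR A R"
    then obtain r where "\<And>U V. (U,V) \<in> t \<Longrightarrow> U \<subseteq> A \<and> V \<subseteq> A" using DR_E by blast
    then show "t \<in> Pow (Pow A \<times> Pow A)" by auto
  qed
  moreover have "\<forall>r\<in>DR A R. \<forall>s\<in>DR A R. r O s \<in> DR A R" using DR_comp[OF up] by blast
  moreover have "\<forall>r\<in>DR A R. \<forall>s. s \<subseteq> r \<longrightarrow> s \<in> DR A R" using DR_sub by blast
  ultimately show ?thesis unfolding uniform_preorder_def using DR_refl[OF up] by blast
qed


lemma key_meet: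
  assumes up: "uniform_preorder A R" and cw: "cartesian_with A R tp mt" and r: "r1 \<in> R" "r2 \<in> R"
  shows "{(x, mt (a,b)) | x a b. x \<in> A \<and> (x,a) \<in> r1 \<and> (x,b) \<in> r2} \<in> R"
proof (rule up_comp[OF up cw_unit[OF up cw] cw_mono[OF up cw r]])
  show "{(x, mt (a,b)) | x a b. x \<in> A \<and> (x,a) \<in> r1 \<and> (x,b) \<in> r2}
    \<subseteq> {(a, mt (a,a)) | a. a \<in> A} O {(mt (a,b), mt (a',b')) | a b a' b'. (a,a')\<in>r1 \<and> (b,b')\<in>r2}"
    by blast
qed

definition mtD :: "('a \<times> 'a \<Rightarrow> 'a) \<Rightarrow> 'a set \<times> 'a set \<Rightarrow> 'a set" where
  "mtD mt p = {mt (a,b) | a b. a \<in> fst p \<and> b \<in> snd p}"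

lemma mtD_mem: "x \<in> mtD mt (U,V) \<longleftrightarrow> (\<exists>a b. x = mt (a,b) \<and> a \<in> U \<and> b \<in> V)"
  unfolding mtD_def by auto

lemma mtD_sub:
  assumes cw: "cartesian_with A R tp mt" and up: "uniform_preorder A R" and UV: "U \<subseteq> A" "V \<subseteq> A"
  shows "mtD mt (U,V) \<subseteq> A"
proof
  fix x assume "x \<in> mtD mt (U,V)"
  then obtain a b where "x = mt (a,b)" "a \<in> U" "b \<in> V" unfolding mtD_def by auto
  then show "x \<in> A" using cw_mt[OF up cw] UV by blast
qed

lemma cwD_a1:
  assumes up: "uniform_preorder A R" and cw: "cartesian_with A R tp mt"
  shows "adjunction (Pow A) (DR A R) one_set one_rel (\<lambda>_. ()) (\<lambda>_. A)"
    unfolding adjunction_def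
  proof (intro conjI)
    show "monotone_map (Pow A) (DR A R) one_set one_rel (\<lambda>_. ())"
      unfolding monotone_map_def one_set_def one_rel_def by auto
    show "monotone_map one_set one_rel (Pow A) (DR A R) (\<lambda>_. A)"
      unfolding monotone_map_def by (intro conjI ballI, simp, rule DR_Id[OF up]) blast
    show "map_le (Pow A) (DR A R) (\<lambda>a. a) ((\<lambda>_. A) \<circ> (\<lambda>_. ()))"
      unfolding map_le_def by (rule DR_Id[OF up]) auto
    show "map_le one_set one_rel ((\<lambda>_. ()) \<circ> (\<lambda>_. A)) (\<lambda>b. b)"
      unfolding map_le_def one_set_def one_rel_def by auto
  qed

lemma cwD_diag:
  assumes up: "uniform_preorder A R" and cw: "cartesian_with A R tp mt"
  shows "monotone_map (Pow A) (DR A R) (Pow A \<times> Pow A) (prod_rel (DR A R) (DR A R)) (\<lambda>a. (a, a))"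
  unfolding monotone_map_def
proof (intro conjI ballI)
  fix t assume t: "t \<in> DR A R"
  have "{((a, a), (a', a')) | a a'. (a, a') \<in> t} \<subseteq> rel_times t t" unfolding rel_times_def by blast
  then show "{((a, a), (a', a')) | a a'. (a, a') \<in> t} \<in> prod_rel (DR A R) (DR A R)"
    unfolding prod_rel_def using t by blast
qed auto

lemma cwD_mono:
  assumes up: "uniform_preorder A R" and cw: "cartesian_with A R tp mt"
  shows "monotone_map (Pow A \<times> Pow A) (prod_rel (DR A R) (DR A R)) (Pow A) (DR A R) (mtD mt)"
  unfolding monotone_map_def
proof (intro conjI ballI)
  fix p assume "p \<in> Pow A \<times> Pow A"
  then show "mtD mt p \<in> Pow A" using mtD_sub[OF cw up] by (cases p) auto
next
  fix t assume "t \<in> prod_rel (DR A R) (DR A R)"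
  then obtain t1 t2 where t12: "t1 \<in> DR A R" "t2 \<in> DR A R" "t \<subseteq> rel_times t1 t2"
    unfolding prod_rel_def by blast
  obtain r1 where r1: "r1 \<in> R" "\<forall>U V. (U,V) \<in> t1 \<longrightarrow> U \<subseteq> A \<and> V \<subseteq> A \<and> (\<forall>a\<in>U. \<exists>b\<in>V. (a,b) \<in> r1)"
    using DR_E[OF t12(1)] by blast
  obtain r2 where r2: "r2 \<in> R" "\<forall>U V. (U,V) \<in> t2 \<longrightarrow> U \<subseteq> A \<and> V \<subseteq> A \<and> (\<forall>a\<in>U. \<exists>b\<in>V. (a,b) \<in> r2)"
    using DR_E[OF t12(2)] by blast
  show "{(mtD mt p, mtD mt p') | p p'. (p, p') \<in> t} \<in> DR A R"
  proof (rule DR_I[OF cw_mono[OF up cw r1(1) r2(1)]])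
    fix W W' assume "(W, W') \<in> {(mtD mt p, mtD mt p') | p p'. (p, p') \<in> t}"
    then obtain U V U' V' where W: "W = mtD mt (U,V)" "W' = mtD mt (U',V')" "(U,U') \<in> t1" "(V,V') \<in> t2"
      using t12(3) unfolding rel_times_def by blast
    have s: "U \<subseteq> A" "U' \<subseteq> A" "V \<subseteq> A" "V' \<subseteq> A" using r1(2) r2(2) W(3,4) by blast+
    have "\<forall>c\<in>W. \<exists>d\<in>W'. (c, d) \<in> {(mt (a,b), mt (a',b')) | a b a' b'. (a,a')\<in>r1 \<and> (b,b')\<in>r2}"
    proof
      fix c assume "c \<in> W"
      then obtain a b where ab: "c = mt (a,b)" "a \<in> U" "b \<in> V" using W(1) unfolding mtD_def by auto
      obtain a' where a': "a' \<in> U'" "(a,a') \<in> r1" using r1(2) W(3) ab(2) by blast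
      obtain b' where b': "b' \<in> V'" "(b,b') \<in> r2" using r2(2) W(4) ab(3) by blast
      have d1: "mt (a',b') \<in> W'" using W(2) a'(1) b'(1) unfolding mtD_def by (simp; blast)
      have d2: "(c, mt (a',b')) \<in> {(mt (a,b), mt (a',b')) | a b a' b'. (a,a')\<in>r1 \<and> (b,b')\<in>r2}"
        using ab(1) a'(2) b'(2) by blast
      show "\<exists>d\<in>W'. (c, d) \<in> {(mt (a,b), mt (a',b')) | a b a' b'. (a,a')\<in>r1 \<and> (b,b')\<in>r2}"
        using d1 d2 by blast
    qed
    then show "W \<subseteq> A \<and> W' \<subseteq> A \<and> (\<forall>c\<in>W. \<exists>d\<in>W'. (c, d) \<in> {(mt (a,b), mt (a',b')) | a b a' b'. (a,a')\<in>r1 \<and> (b,b')\<in>r2})"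
      using W(1,2) mtD_sub[OF cw up] s by auto
  qed
qed

lemma cwD_unit:
  assumes up: "uniform_preorder A R" and cw: "cartesian_with A R tp mt"
  shows "map_le (Pow A) (DR A R) (\<lambda>a. a) (mtD mt \<circ> (\<lambda>a. (a, a)))"
  unfolding map_le_def
proof (rule DR_I[OF cw_unit[OF up cw]])
  fix U W assume "(U, W) \<in> {(a, (mtD mt \<circ> (\<lambda>a. (a, a))) a) | a. a \<in> Pow A}"
  then have WU: "W = mtD mt (U,U)" "U \<subseteq> A" by auto
  show "U \<subseteq> A \<and> W \<subseteq> A \<and> (\<forall>a\<in>U. \<exists>b\<in>W. (a,b) \<in> {(a, mt (a,a)) | a. a \<in> A})"
  proof (intro conjI ballI)
    fix a assume "a \<in> U"
    then have "mt (a,a) \<in> W" unfolding WU(1) mtD_mem by blast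
    moreover have "a \<in> A" using \<open>a \<in> U\<close> WU(2) by blast
    ultimately show "\<exists>b\<in>W. (a,b) \<in> {(a, mt (a,a)) | a. a \<in> A}" by blast
  qed (simp_all add: WU mtD_sub[OF cw up])
qed

lemma cwD_counit:
  assumes up: "uniform_preorder A R" and cw: "cartesian_with A R tp mt"
  shows "map_le (Pow A \<times> Pow A) (prod_rel (DR A R) (DR A R)) ((\<lambda>a. (a, a)) \<circ> mtD mt) (\<lambda>b. b)"
  unfolding map_le_def prod_rel_def
proof (intro CollectI bexI)
  let ?t1 = "{(mtD mt (U,V), U) | U V. U \<subseteq> A \<and> V \<subseteq> A}"
  let ?t2 = "{(mtD mt (U,V), V) | U V. U \<subseteq> A \<and> V \<subseteq> A}"
  show "{(((\<lambda>a. (a, a)) \<circ> mtD mt) a, a) | a. a \<in> Pow A \<times> Pow A} \<subseteq> rel_times ?t1 ?t2"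
  proof
    fix x assume "x \<in> {(((\<lambda>a. (a, a)) \<circ> mtD mt) a, a) | a. a \<in> Pow A \<times> Pow A}"
    then obtain U V where "x = ((mtD mt (U,V), mtD mt (U,V)), (U,V))" "U \<subseteq> A" "V \<subseteq> A" by auto
    then show "x \<in> rel_times ?t1 ?t2" unfolding rel_times_def by blast
  qed
  show "?t1 \<in> DR A R"
  proof (rule DR_I[OF cw_c1[OF up cw]])
    fix W U assume "(W, U) \<in> ?t1"
    then obtain V where WU: "W = mtD mt (U,V)" "U \<subseteq> A" "V \<subseteq> A" by blast
    show "W \<subseteq> A \<and> U \<subseteq> A \<and> (\<forall>a\<in>W. \<exists>b\<in>U. (a,b) \<in> {(mt (a,b), a) | a b. a\<in>A \<and> b\<in>A})"
    proof (intro conjI ballI)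
      fix x assume "x \<in> W"
      then obtain a b where "x = mt (a,b)" "a \<in> U" "b \<in> V" using WU(1) mtD_mem[of x mt U V] by blast
      then show "\<exists>b\<in>U. (x,b) \<in> {(mt (a,b), a) | a b. a\<in>A \<and> b\<in>A}" using WU by blast
    qed (simp_all add: WU mtD_sub[OF cw up])
  qed
  show "?t2 \<in> DR A R"
  proof (rule DR_I[OF cw_c2[OF up cw]])
    fix W V assume "(W, V) \<in> ?t2"
    then obtain U where WU: "W = mtD mt (U,V)" "U \<subseteq> A" "V \<subseteq> A" by blast
    show "W \<subseteq> A \<and> V \<subseteq> A \<and> (\<forall>a\<in>W. \<exists>b\<in>V. (a,b) \<in> {(mt (a,b), b) | a b. a\<in>A \<and> b\<in>A})"
    proof (intro conjI ballI)
      fix x assume "x \<in> W"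
      then obtain a b where "x = mt (a,b)" "a \<in> U" "b \<in> V" using WU(1) mtD_mem[of x mt U V] by blast
      then show "\<exists>b\<in>V. (x,b) \<in> {(mt (a,b), b) | a b. a\<in>A \<and> b\<in>A}" using WU by blast
    qed (simp_all add: WU mtD_sub[OF cw up])
  qed
qed

lemma cw_D:
  assumes up: "uniform_preorder A R" and cw: "cartesian_with A R tp mt"
  shows "cartesian_with (Pow A) (DR A R) (\<lambda>_. A) (mtD mt)"
proof -
  have a2: "adjunction (Pow A) (DR A R) (Pow A \<times> Pow A) (prod_rel (DR A R) (DR A R)) (\<lambda>a. (a, a)) (mtD mt)"
    unfolding adjunction_def
    using cwD_diag[OF up cw] cwD_mono[OF up cw] cwD_unit[OF up cw] cwD_counit[OF up cw] by blast
  show ?thesis unfolding cartesian_with_def using cwD_a1[OF up cw] a2 by blast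
qed


lemma eta_meet:
  assumes up: "uniform_preorder A R" and cwA: "cartesian_with A R tA mA"
    and cwB: "cartesian_with (Pow A) (DR A R) tB mB"
  shows "map_iso (A \<times> A) (DR A R) ((\<lambda>a. {a}) \<circ> mA) (mB \<circ> map_prod (\<lambda>a. {a}) (\<lambda>a. {a}))"
proof -
  note upD = up_D[OF up]
  let ?t = "{({mA (a,b)}, {a}) | a b. a \<in> A \<and> b \<in> A}"
  let ?t' = "{({mA (a,b)}, {b}) | a b. a \<in> A \<and> b \<in> A}"
  have t: "?t \<in> DR A R"
  proof (rule DR_I[OF cw_c1[OF up cwA]])
    fix U V assume "(U,V) \<in> ?t"
    then obtain a b where "U = {mA (a,b)}" "V = {a}" "a \<in> A" "b \<in> A" by blast
    then show "U \<subseteq> A \<and> V \<subseteq> A \<and> (\<forall>x\<in>U. \<exists>y\<in>V. (x,y) \<in> {(mA (a,b), a) | a b. a\<in>A \<and> b\<in>A})"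
      using cw_mt[OF up cwA] by blast
  qed
  have t': "?t' \<in> DR A R"
  proof (rule DR_I[OF cw_c2[OF up cwA]])
    fix U V assume "(U,V) \<in> ?t'"
    then obtain a b where "U = {mA (a,b)}" "V = {b}" "a \<in> A" "b \<in> A" by blast
    then show "U \<subseteq> A \<and> V \<subseteq> A \<and> (\<forall>x\<in>U. \<exists>y\<in>V. (x,y) \<in> {(mA (a,b), b) | a b. a\<in>A \<and> b\<in>A})"
      using cw_mt[OF up cwA] by blast
  qed
  have T1: "{(W, mB (W,W)) | W. W \<in> Pow A} \<in> DR A R" by (rule cw_unit[OF upD cwB])
  have T2: "{(mB (U,V), mB (U',V')) | U V U' V'. (U,U')\<in>?t \<and> (V,V')\<in>?t'} \<in> DR A R"
    by (rule cw_mono[OF upD cwB t t'])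
  have d1: "map_le (A \<times> A) (DR A R) ((\<lambda>a. {a}) \<circ> mA) (mB \<circ> map_prod (\<lambda>a. {a}) (\<lambda>a. {a}))"
    unfolding map_le_def
  proof (rule DR_comp[OF up T1 T2])
    show "{(((\<lambda>a. {a}) \<circ> mA) p, (mB \<circ> map_prod (\<lambda>a. {a}) (\<lambda>a. {a})) p) | p. p \<in> A \<times> A}
      \<subseteq> {(W, mB (W,W)) | W. W \<in> Pow A} O {(mB (U,V), mB (U',V')) | U V U' V'. (U,U')\<in>?t \<and> (V,V')\<in>?t'}"
    proof
      fix x assume "x \<in> {(((\<lambda>a. {a}) \<circ> mA) p, (mB \<circ> map_prod (\<lambda>a. {a}) (\<lambda>a. {a})) p) | p. p \<in> A \<times> A}"
      then obtain a b where x: "x = ({mA (a,b)}, mB ({a},{b}))" "a \<in> A" "b \<in> A" by auto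
      have c: "mA (a,b) \<in> A" using cw_mt[OF up cwA x(2,3)] .
      have 1: "({mA (a,b)}, mB ({mA (a,b)},{mA (a,b)})) \<in> {(W, mB (W,W)) | W. W \<in> Pow A}"
        by (rule CollectI, rule exI[of _ "{mA (a,b)}"]) (simp add: c)
      have ta: "({mA (a,b)}, {a}) \<in> ?t" by (rule CollectI, rule exI[of _ a], rule exI[of _ b]) (simp add: x)
      have tb: "({mA (a,b)}, {b}) \<in> ?t'" by (rule CollectI, rule exI[of _ a], rule exI[of _ b]) (simp add: x)
      have 2: "(mB ({mA (a,b)},{mA (a,b)}), mB ({a},{b})) \<in> {(mB (U,V), mB (U',V')) | U V U' V'. (U,U')\<in>?t \<and> (V,V')\<in>?t'}"
        by (rule CollectI, rule exI[of _ "{mA (a,b)}"], rule exI[of _ "{mA (a,b)}"], rule exI[of _ "{a}"], rule exI[of _ "{b}"]) (intro conjI refl ta tb)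
      show "x \<in> {(W, mB (W,W)) | W. W \<in> Pow A} O {(mB (U,V), mB (U',V')) | U V U' V'. (U,U')\<in>?t \<and> (V,V')\<in>?t'}"
        unfolding x(1) by (rule relcompI[OF 1 2])
    qed
  qed
  obtain r1 where r1: "r1 \<in> R" "\<forall>U V. (U,V) \<in> {(mB (U,V), U) | U V. U \<in> Pow A \<and> V \<in> Pow A} \<longrightarrow>
      U \<subseteq> A \<and> V \<subseteq> A \<and> (\<forall>a\<in>U. \<exists>b\<in>V. (a,b) \<in> r1)"
    using DR_E[OF cw_c1[OF upD cwB]] by blast
  obtain r2 where r2: "r2 \<in> R" "\<forall>U V. (U,V) \<in> {(mB (U,V), V) | U V. U \<in> Pow A \<and> V \<in> Pow A} \<longrightarrow>
      U \<subseteq> A \<and> V \<subseteq> A \<and> (\<forall>a\<in>U. \<exists>b\<in>V. (a,b) \<in> r2)"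
    using DR_E[OF cw_c2[OF upD cwB]] by blast
  have d2: "map_le (A \<times> A) (DR A R) (mB \<circ> map_prod (\<lambda>a. {a}) (\<lambda>a. {a})) ((\<lambda>a. {a}) \<circ> mA)"
    unfolding map_le_def
  proof (rule DR_I[OF key_meet[OF up cwA r1(1) r2(1)]])
    fix W V assume "(W, V) \<in> {((mB \<circ> map_prod (\<lambda>a. {a}) (\<lambda>a. {a})) p, ((\<lambda>a. {a}) \<circ> mA) p) | p. p \<in> A \<times> A}"
    then obtain a b where x: "W = mB ({a},{b})" "V = {mA (a,b)}" "a \<in> A" "b \<in> A" by auto
    have WA: "W \<subseteq> A" using cw_mt[OF upD cwB, of "{a}" "{b}"] x by auto
    have VA: "V \<subseteq> A" using cw_mt[OF up cwA x(3,4)] x(2) by auto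
    have "\<forall>y\<in>W. \<exists>z\<in>V. (y,z) \<in> {(x, mA (a,b)) | x a b. x \<in> A \<and> (x,a) \<in> r1 \<and> (x,b) \<in> r2}"
    proof
      fix y assume y: "y \<in> W"
      have p1: "(W, {a}) \<in> {(mB (U,V), U) | U V. U \<in> Pow A \<and> V \<in> Pow A}" using x by blast
      have p2: "(W, {b}) \<in> {(mB (U,V), V) | U V. U \<in> Pow A \<and> V \<in> Pow A}" using x by blast
      have "\<forall>a'\<in>W. \<exists>b'\<in>{a}. (a',b') \<in> r1" using r1(2)[rule_format, OF p1] by (elim conjE)
      then have "(y,a) \<in> r1" using y by simp
      moreover have "\<forall>a'\<in>W. \<exists>b'\<in>{b}. (a',b') \<in> r2" using r2(2)[rule_format, OF p2] by (elim conjE)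
      then have "(y,b) \<in> r2" using y by simp
      moreover have "y \<in> A" using WA y by blast
      ultimately show "\<exists>z\<in>V. (y,z) \<in> {(x, mA (a,b)) | x a b. x \<in> A \<and> (x,a) \<in> r1 \<and> (x,b) \<in> r2}"
        using x(2) by blast
    qed
    then show "W \<subseteq> A \<and> V \<subseteq> A \<and> (\<forall>y\<in>W. \<exists>z\<in>V. (y,z) \<in> {(x, mA (a,b)) | x a b. x \<in> A \<and> (x,a) \<in> r1 \<and> (x,b) \<in> r2})"
      using WA VA by blast
  qed
  show ?thesis unfolding map_iso_def using d1 d2 by blast
qed

lemma eta_top:
  assumes up: "uniform_preorder A R" and cwA: "cartesian_with A R tA mA"
    and cwB: "cartesian_with (Pow A) (DR A R) tB mB"
  shows "map_iso one_set (DR A R) ((\<lambda>a. {a}) \<circ> tA) tB"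
proof -
  note upD = up_D[OF up]
  have tA: "tA () \<in> A" by (rule cw_tp[OF up cwA])
  have tB: "tB () \<subseteq> A" using cw_tp[OF upD cwB] by simp
  have d1: "map_le one_set (DR A R) ((\<lambda>a. {a}) \<circ> tA) tB"
    unfolding map_le_def one_set_def
  proof (rule DR_sub[OF cw_top[OF upD cwB]])
    show "{(((\<lambda>a. {a}) \<circ> tA) a, tB a) | a. a \<in> {()}} \<subseteq> {(a, tB ()) | a. a \<in> Pow A}"
      using tA by auto
  qed
  have d2: "map_le one_set (DR A R) tB ((\<lambda>a. {a}) \<circ> tA)"
    unfolding map_le_def one_set_def
  proof (rule DR_I[OF cw_top[OF up cwA]])
    fix U V assume "(U,V) \<in> {(tB a, ((\<lambda>a. {a}) \<circ> tA) a) | a. a \<in> {()}}"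
    then have "U = tB ()" "V = {tA ()}" by auto
    then show "U \<subseteq> A \<and> V \<subseteq> A \<and> (\<forall>a\<in>U. \<exists>b\<in>V. (a,b) \<in> {(a, tA ()) | a. a \<in> A})"
      using tA tB by blast
  qed
  show ?thesis unfolding map_iso_def using d1 d2 by blast
qed

lemma eta_mono:
  assumes up: "uniform_preorder A R"
  shows "monotone_map A R (Pow A) (DR A R) (\<lambda>a. {a})"
  unfolding monotone_map_def
proof (intro conjI ballI)
  fix r assume r: "r \<in> R"
  show "{({a}, {a'}) | a a'. (a, a') \<in> r} \<in> DR A R"
  proof (rule DR_I[OF r])
    fix U V assume "(U,V) \<in> {({a}, {a'}) | a a'. (a, a') \<in> r}"
    then obtain a a' where "U = {a}" "V = {a'}" "(a,a') \<in> r" by blast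
    then show "U \<subseteq> A \<and> V \<subseteq> A \<and> (\<forall>x\<in>U. \<exists>y\<in>V. (x,y) \<in> r)"
      using up_sub2[OF up r] by blast
  qed
qed auto

lemma D_cartesian: "cartesian A R \<Longrightarrow> cartesian (Pow A) (DR A R)"
  unfolding cartesian_def using up_D cw_D by blast

lemma eta_cartesian: assumes "cartesian A R" shows "cartesian_mor A R (Pow A) (DR A R) (\<lambda>a. {a})"
proof -
  have up: "uniform_preorder A R" using assms unfolding cartesian_def by blast
  show ?thesis unfolding cartesian_mor_def
    using assms D_cartesian[OF assms] eta_mono[OF up] eta_meet[OF up] eta_top[OF up] by blast
qed


lemma fam_refl: "uniform_preorder B S \<Longrightarrow> fam_el B I \<phi> \<Longrightarrow> fam_le S I \<phi> \<phi>"
  unfolding fam_le_def fam_el_def by (rule up_sub[OF _ up_Id]) auto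

lemma fam_trans:
  assumes up: "uniform_preorder B S" and 1: "fam_le S I \<phi> \<psi>" and 2: "fam_le S I \<psi> \<chi>"
  shows "fam_le S I \<phi> \<chi>"
  using 1 2 unfolding fam_le_def by (rule up_comp[OF up]) blast

lemma fam_reidx:
  assumes up: "uniform_preorder B S" and u: "maps_into u J I" and 1: "fam_le S I \<phi> \<psi>"
  shows "fam_le S J (\<phi> \<circ> u) (\<psi> \<circ> u)"
  using 1 unfolding fam_le_def
proof (rule up_sub[OF up])
  show "{((\<phi> \<circ> u) i, (\<psi> \<circ> u) i) |i. i \<in> J} \<subseteq> {(\<phi> i, \<psi> i) |i. i \<in> I}"
    using u unfolding maps_into_def by auto
qed

lemma fam_el_reidx: "maps_into u J I \<Longrightarrow> fam_el B I \<phi> \<Longrightarrow> fam_el B J (\<phi> \<circ> u)"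
  unfolding maps_into_def fam_el_def by auto

lemma meet_le_meet: "is_fam_meet B S I \<phi> \<psi> m \<Longrightarrow> is_fam_meet B S I \<phi> \<psi> m' \<Longrightarrow> fam_le S I m m'"
  unfolding is_fam_meet_def by blast

lemma exists_le:
  assumes up: "uniform_preorder B S" and e: "is_fam_exists B S J I u \<psi> e"
  shows "fam_le S J \<psi> (e \<circ> u)"
proof -
  have "fam_el B I e" using e unfolding is_fam_exists_def by blast
  then show ?thesis using e fam_refl[OF up] unfolding is_fam_exists_def by blast
qed

lemma exists_uniq:
  assumes up: "uniform_preorder B S" and e: "is_fam_exists B S J I u \<psi> e" and e': "is_fam_exists B S J I u \<psi> e'"
  shows "fam_le S I e e'"
proof -
  have "fam_el B I e'" using e' unfolding is_fam_exists_def by blast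
  then show ?thesis using e exists_le[OF up e'] unfolding is_fam_exists_def by blast
qed

lemma fam_le_sub:
  assumes up: "uniform_preorder A R" and h: "\<And>i. i \<in> I \<Longrightarrow> \<phi> i \<subseteq> \<psi> i \<and> \<psi> i \<subseteq> A"
  shows "fam_le (DR A R) I \<phi> \<psi>"
  unfolding fam_le_def
proof (rule DR_Id[OF up])
  fix U V assume "(U,V) \<in> {(\<phi> i, \<psi> i) | i. i \<in> I}"
  then obtain i where "i \<in> I" "U = \<phi> i" "V = \<psi> i" by blast
  then show "U \<subseteq> V \<and> V \<subseteq> A" using h by blast
qed

definition meet0 :: "('a \<times> 'a \<Rightarrow> 'a) \<Rightarrow> ('i \<Rightarrow> 'a set) \<Rightarrow> ('i \<Rightarrow> 'a set) \<Rightarrow> 'i \<Rightarrow> 'a set" where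
  "meet0 mt \<phi> \<psi> = (\<lambda>i. mtD mt (\<phi> i, \<psi> i))"

definition ex0 :: "'j set \<Rightarrow> ('j \<Rightarrow> 'i) \<Rightarrow> ('j \<Rightarrow> 'a set) \<Rightarrow> 'i \<Rightarrow> 'a set" where
  "ex0 J u \<psi> = (\<lambda>i. \<Union> (\<psi> ` {j \<in> J. u j = i}))"

lemma meet0_reidx: "meet0 mt (\<phi> \<circ> u) (\<psi> \<circ> u) = meet0 mt \<phi> \<psi> \<circ> u"
  unfolding meet0_def by auto

lemma fam_le_DR_E:
  assumes "fam_le (DR A R) I \<phi> \<psi>"
  shows "\<exists>r\<in>R. \<forall>i x. i \<in> I \<longrightarrow> x \<in> \<phi> i \<longrightarrow> (\<exists>y\<in>\<psi> i. (x,y) \<in> r)"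
proof -
  obtain r where r: "r \<in> R" "\<forall>U V. (U,V) \<in> {(\<phi> i, \<psi> i) | i. i \<in> I} \<longrightarrow> U \<subseteq> A \<and> V \<subseteq> A \<and> (\<forall>a\<in>U. \<exists>b\<in>V. (a,b) \<in> r)"
    using DR_E[OF assms[unfolded fam_le_def]] by blast
  have "\<forall>i x. i \<in> I \<longrightarrow> x \<in> \<phi> i \<longrightarrow> (\<exists>y\<in>\<psi> i. (x,y) \<in> r)"
  proof (intro allI impI)
    fix i x assume "i \<in> I" "x \<in> \<phi> i"
    then have "(\<phi> i, \<psi> i) \<in> {(\<phi> i, \<psi> i) | i. i \<in> I}" by blast
    then show "\<exists>y\<in>\<psi> i. (x,y) \<in> r" using r(2) \<open>x \<in> \<phi> i\<close> by blast
  qed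
  then show ?thesis using r(1) by blast
qed

lemma fam_le_DR_I:
  assumes "r \<in> R" "\<And>i. i \<in> I \<Longrightarrow> \<phi> i \<subseteq> A \<and> \<psi> i \<subseteq> A"
    "\<And>i x. i \<in> I \<Longrightarrow> x \<in> \<phi> i \<Longrightarrow> \<exists>y\<in>\<psi> i. (x,y) \<in> r"
  shows "fam_le (DR A R) I \<phi> \<psi>"
  unfolding fam_le_def
proof (rule DR_I[OF assms(1)])
  fix U V assume "(U,V) \<in> {(\<phi> i, \<psi> i) | i. i \<in> I}"
  then obtain i where "i \<in> I" "U = \<phi> i" "V = \<psi> i" by blast
  then show "U \<subseteq> A \<and> V \<subseteq> A \<and> (\<forall>a\<in>U. \<exists>b\<in>V. (a,b) \<in> r)" using assms(2,3) by blast
qed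

lemma meet0_meet:
  assumes up: "uniform_preorder A R" and cw: "cartesian_with A R tp mt"
    and \<phi>: "fam_el (Pow A) I \<phi>" and \<psi>: "fam_el (Pow A) I \<psi>"
  shows "is_fam_meet (Pow A) (DR A R) I \<phi> \<psi> (meet0 mt \<phi> \<psi>)"
proof -
  have sub: "\<And>i. i \<in> I \<Longrightarrow> \<phi> i \<subseteq> A \<and> \<psi> i \<subseteq> A \<and> meet0 mt \<phi> \<psi> i \<subseteq> A"
    using \<phi> \<psi> mtD_sub[OF cw up] unfolding fam_el_def meet0_def by auto
  have el: "fam_el (Pow A) I (meet0 mt \<phi> \<psi>)" using sub unfolding fam_el_def by blast
  have l1: "fam_le (DR A R) I (meet0 mt \<phi> \<psi>) \<phi>"
  proof (rule fam_le_DR_I[OF cw_c1[OF up cw]])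
    fix i x assume i: "i \<in> I" and "x \<in> meet0 mt \<phi> \<psi> i"
    then obtain a b where "x = mt (a,b)" "a \<in> \<phi> i" "b \<in> \<psi> i" unfolding meet0_def mtD_mem by blast
    then show "\<exists>y\<in>\<phi> i. (x,y) \<in> {(mt (a,b), a) | a b. a\<in>A \<and> b\<in>A}" using sub[OF i] by blast
  qed (use sub in blast)
  have l2: "fam_le (DR A R) I (meet0 mt \<phi> \<psi>) \<psi>"
  proof (rule fam_le_DR_I[OF cw_c2[OF up cw]])
    fix i x assume i: "i \<in> I" and "x \<in> meet0 mt \<phi> \<psi> i"
    then obtain a b where "x = mt (a,b)" "a \<in> \<phi> i" "b \<in> \<psi> i" unfolding meet0_def mtD_mem by blast
    then show "\<exists>y\<in>\<psi> i. (x,y) \<in> {(mt (a,b), b) | a b. a\<in>A \<and> b\<in>A}" using sub[OF i] by blast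
  qed (use sub in blast)
  have l3: "fam_le (DR A R) I \<chi> (meet0 mt \<phi> \<psi>)"
    if \<chi>: "fam_el (Pow A) I \<chi>" and c1: "fam_le (DR A R) I \<chi> \<phi>" and c2: "fam_le (DR A R) I \<chi> \<psi>" for \<chi>
  proof -
    obtain s1 where s1: "s1 \<in> R" "\<And>i x. i \<in> I \<Longrightarrow> x \<in> \<chi> i \<Longrightarrow> \<exists>y\<in>\<phi> i. (x,y) \<in> s1"
      using fam_le_DR_E[OF c1] by blast
    obtain s2 where s2: "s2 \<in> R" "\<And>i x. i \<in> I \<Longrightarrow> x \<in> \<chi> i \<Longrightarrow> \<exists>y\<in>\<psi> i. (x,y) \<in> s2"
      using fam_le_DR_E[OF c2] by blast
    show ?thesis
    proof (rule fam_le_DR_I[OF key_meet[OF up cw s1(1) s2(1)]])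
      fix i assume i: "i \<in> I"
      show "\<chi> i \<subseteq> A \<and> meet0 mt \<phi> \<psi> i \<subseteq> A" using \<chi> sub[OF i] i unfolding fam_el_def by blast
    next
      fix i x assume i: "i \<in> I" and x: "x \<in> \<chi> i"
      obtain a where a: "a \<in> \<phi> i" "(x,a) \<in> s1" using s1(2)[OF i x] by blast
      obtain b where b: "b \<in> \<psi> i" "(x,b) \<in> s2" using s2(2)[OF i x] by blast
      have xA: "x \<in> A" using \<chi> i x unfolding fam_el_def by blast
      have "mt (a,b) \<in> meet0 mt \<phi> \<psi> i" unfolding meet0_def mtD_mem using a(1) b(1) by blast
      moreover have "(x, mt (a,b)) \<in> {(x, mt (a,b)) | x a b. x \<in> A \<and> (x,a) \<in> s1 \<and> (x,b) \<in> s2}"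
        using xA a(2) b(2) by blast
      ultimately show "\<exists>y\<in>meet0 mt \<phi> \<psi> i. (x,y) \<in> {(x, mt (a,b)) | x a b. x \<in> A \<and> (x,a) \<in> s1 \<and> (x,b) \<in> s2}"
        by blast
    qed
  qed
  show ?thesis unfolding is_fam_meet_def using el l1 l2 l3 by blast
qed

lemma top0_top:
  assumes up: "uniform_preorder A R"
  shows "is_fam_top (Pow A) (DR A R) I (\<lambda>_. A)"
  unfolding is_fam_top_def
proof (intro conjI allI impI)
  show "fam_el (Pow A) I (\<lambda>_. A)" unfolding fam_el_def by simp
  fix \<phi> assume "fam_el (Pow A) I \<phi>"
  then show "fam_le (DR A R) I \<phi> (\<lambda>_. A)" unfolding fam_el_def by (intro fam_le_sub[OF up]) auto
qed

lemma ex0_exists: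
  assumes up: "uniform_preorder A R" and u: "maps_into u J I" and \<psi>: "fam_el (Pow A) J \<psi>"
  shows "is_fam_exists (Pow A) (DR A R) J I u \<psi> (ex0 J u \<psi>)"
  unfolding is_fam_exists_def
proof (intro conjI allI impI)
  show el: "fam_el (Pow A) I (ex0 J u \<psi>)" using \<psi> unfolding fam_el_def ex0_def by auto
  fix \<phi> assume \<phi>: "fam_el (Pow A) I \<phi>"
  show "fam_le (DR A R) I (ex0 J u \<psi>) \<phi> = fam_le (DR A R) J \<psi> (\<phi> \<circ> u)"
  proof
    assume h: "fam_le (DR A R) I (ex0 J u \<psi>) \<phi>"
    obtain r where r: "r \<in> R" "\<And>i x. i \<in> I \<Longrightarrow> x \<in> ex0 J u \<psi> i \<Longrightarrow> \<exists>y\<in>\<phi> i. (x,y) \<in> r"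
      using fam_le_DR_E[OF h] by blast
    show "fam_le (DR A R) J \<psi> (\<phi> \<circ> u)"
    proof (rule fam_le_DR_I[OF r(1)])
      fix j assume j: "j \<in> J"
      show "\<psi> j \<subseteq> A \<and> (\<phi> \<circ> u) j \<subseteq> A" using \<psi> \<phi> u j unfolding fam_el_def maps_into_def by auto
    next
      fix j x assume j: "j \<in> J" and x: "x \<in> \<psi> j"
      have "u j \<in> I" using u j unfolding maps_into_def by blast
      moreover have "x \<in> ex0 J u \<psi> (u j)" unfolding ex0_def using j x by blast
      ultimately show "\<exists>y\<in>(\<phi> \<circ> u) j. (x,y) \<in> r" using r(2) by simp
    qed
  next
    assume h: "fam_le (DR A R) J \<psi> (\<phi> \<circ> u)"
    obtain r where r: "r \<in> R" "\<And>j x. j \<in> J \<Longrightarrow> x \<in> \<psi> j \<Longrightarrow> \<exists>y\<in>(\<phi> \<circ> u) j. (x,y) \<in> r"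
      using fam_le_DR_E[OF h] by blast
    show "fam_le (DR A R) I (ex0 J u \<psi>) \<phi>"
    proof (rule fam_le_DR_I[OF r(1)])
      fix i assume i: "i \<in> I"
      show "ex0 J u \<psi> i \<subseteq> A \<and> \<phi> i \<subseteq> A" using el \<phi> i unfolding fam_el_def by auto
    next
      fix i x assume i: "i \<in> I" and x: "x \<in> ex0 J u \<psi> i"
      then obtain j where j: "j \<in> J" "u j = i" "x \<in> \<psi> j" unfolding ex0_def by blast
      show "\<exists>y\<in>\<phi> i. (x,y) \<in> r" using r(2)[OF j(1,3)] j(2) by simp
    qed
  qed
qed


lemma top_reidx:
  assumes up: "uniform_preorder A R" and u: "maps_into u J I" and t: "is_fam_top (Pow A) (DR A R) I t"
  shows "is_fam_top (Pow A) (DR A R) J (t \<circ> u)"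
  unfolding is_fam_top_def
proof (intro conjI allI impI)
  show "fam_el (Pow A) J (t \<circ> u)" using t u fam_el_reidx unfolding is_fam_top_def by blast
  fix \<phi> assume \<phi>: "fam_el (Pow A) J \<phi>"
  have 1: "fam_le (DR A R) J \<phi> (\<lambda>_. A)" using top0_top[OF up] \<phi> unfolding is_fam_top_def by blast
  have "fam_le (DR A R) I (\<lambda>_. A) t" using t top0_top[OF up, of I] unfolding is_fam_top_def by blast
  then have "fam_le (DR A R) J ((\<lambda>_. A) \<circ> u) (t \<circ> u)" by (rule fam_reidx[OF up_D[OF up] u])
  then have 2: "fam_le (DR A R) J (\<lambda>_. A) (t \<circ> u)" by (simp add: o_def)
  show "fam_le (DR A R) J \<phi> (t \<circ> u)" by (rule fam_trans[OF up_D[OF up] 1 2])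
qed

lemma meet_reidx:
  assumes up: "uniform_preorder A R" and cw: "cartesian_with A R tp mt" and u: "maps_into u J I"
    and \<phi>: "fam_el (Pow A) I \<phi>" and \<psi>: "fam_el (Pow A) I \<psi>" and m: "is_fam_meet (Pow A) (DR A R) I \<phi> \<psi> m"
  shows "is_fam_meet (Pow A) (DR A R) J (\<phi> \<circ> u) (\<psi> \<circ> u) (m \<circ> u)"
  unfolding is_fam_meet_def
proof (intro conjI allI impI)
  note upD = up_D[OF up]
  show "fam_el (Pow A) J (m \<circ> u)" using m u fam_el_reidx unfolding is_fam_meet_def by blast
  show "fam_le (DR A R) J (m \<circ> u) (\<phi> \<circ> u)" using m fam_reidx[OF upD u] unfolding is_fam_meet_def by blast
  show "fam_le (DR A R) J (m \<circ> u) (\<psi> \<circ> u)" using m fam_reidx[OF upD u] unfolding is_fam_meet_def by blast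
  fix \<chi> assume \<chi>: "fam_el (Pow A) J \<chi> \<and> fam_le (DR A R) J \<chi> (\<phi> \<circ> u) \<and> fam_le (DR A R) J \<chi> (\<psi> \<circ> u)"
  have "is_fam_meet (Pow A) (DR A R) J (\<phi> \<circ> u) (\<psi> \<circ> u) (meet0 mt (\<phi> \<circ> u) (\<psi> \<circ> u))"
    by (rule meet0_meet[OF up cw fam_el_reidx[OF u \<phi>] fam_el_reidx[OF u \<psi>]])
  then have 1: "fam_le (DR A R) J \<chi> (meet0 mt \<phi> \<psi> \<circ> u)"
    using \<chi> unfolding is_fam_meet_def meet0_reidx by blast
  have "fam_le (DR A R) I (meet0 mt \<phi> \<psi>) m"
    by (rule meet_le_meet[OF meet0_meet[OF up cw \<phi> \<psi>] m])
  then have 2: "fam_le (DR A R) J (meet0 mt \<phi> \<psi> \<circ> u) (m \<circ> u)" by (rule fam_reidx[OF upD u])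
  show "fam_le (DR A R) J \<chi> (m \<circ> u)" by (rule fam_trans[OF upD 1 2])
qed

lemma beck_chevalley:
  assumes up: "uniform_preorder A R"
    and u: "maps_into u J I" and v: "maps_into v K I" and p: "maps_into p P J" and q: "maps_into q P K"
    and comm: "\<forall>x\<in>P. u (p x) = v (q x)"
    and bij: "bij_betw (\<lambda>x. (p x, q x)) P {(j, k). j \<in> J \<and> k \<in> K \<and> u j = v k}"
    and \<psi>: "fam_el (Pow A) J \<psi>" and e: "is_fam_exists (Pow A) (DR A R) J I u \<psi> e"
    and e': "is_fam_exists (Pow A) (DR A R) P K q (\<psi> \<circ> p) e'"
  shows "fam_iso (DR A R) K (e \<circ> v) e'"
proof -
  note upD = up_D[OF up]
  let ?E = "ex0 J u \<psi>" and ?E' = "ex0 P q (\<psi> \<circ> p)"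
  have E: "is_fam_exists (Pow A) (DR A R) J I u \<psi> ?E" by (rule ex0_exists[OF up u \<psi>])
  have E': "is_fam_exists (Pow A) (DR A R) P K q (\<psi> \<circ> p) ?E'" by (rule ex0_exists[OF up q fam_el_reidx[OF p \<psi>]])
  have elE: "fam_el (Pow A) I ?E" using E unfolding is_fam_exists_def by blast
  have elE': "fam_el (Pow A) K ?E'" using E' unfolding is_fam_exists_def by blast
  have img: "(\<lambda>x. (p x, q x)) ` P = {(j, k). j \<in> J \<and> k \<in> K \<and> u j = v k}"
    using bij unfolding bij_betw_def by blast
  have s1: "?E' k \<subseteq> ?E (v k)" if k: "k \<in> K" for k
  proof
    fix y assume "y \<in> ?E' k"
    then obtain x where x: "x \<in> P" "q x = k" "y \<in> \<psi> (p x)" unfolding ex0_def by auto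
    have "p x \<in> J" using p x(1) unfolding maps_into_def by blast
    moreover have "u (p x) = v k" using comm x(1,2) by blast
    ultimately show "y \<in> ?E (v k)" unfolding ex0_def using x(3) by blast
  qed
  have s2: "?E (v k) \<subseteq> ?E' k" if k: "k \<in> K" for k
  proof
    fix y assume "y \<in> ?E (v k)"
    then obtain j where j: "j \<in> J" "u j = v k" "y \<in> \<psi> j" unfolding ex0_def by auto
    then have "(j, k) \<in> (\<lambda>x. (p x, q x)) ` P" using img k by blast
    then obtain x where x: "x \<in> P" "p x = j" "q x = k" by blast
    show "y \<in> ?E' k" unfolding ex0_def using x j(3) by auto
  qed
  have vI: "v k \<in> I" if "k \<in> K" for k using v that unfolding maps_into_def by blast
  have l1: "fam_le (DR A R) K (?E \<circ> v) ?E'"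
    by (rule fam_le_sub[OF up]) (use s2 elE' in \<open>auto simp: fam_el_def\<close>)
  have l2: "fam_le (DR A R) K ?E' (?E \<circ> v)"
    by (rule fam_le_sub[OF up]) (use s1 elE vI in \<open>auto simp: fam_el_def\<close>)
  have a1: "fam_le (DR A R) K (e \<circ> v) (?E \<circ> v)" by (rule fam_reidx[OF upD v exists_uniq[OF upD e E]])
  have a2: "fam_le (DR A R) K (?E \<circ> v) (e \<circ> v)" by (rule fam_reidx[OF upD v exists_uniq[OF upD E e]])
  have b1: "fam_le (DR A R) K ?E' e'" by (rule exists_uniq[OF upD E' e'])
  have b2: "fam_le (DR A R) K e' ?E'" by (rule exists_uniq[OF upD e' E'])
  show ?thesis unfolding fam_iso_def
    using fam_trans[OF upD a1 fam_trans[OF upD l1 b1]] fam_trans[OF upD b2 fam_trans[OF upD l2 a2]] by blast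
qed

lemma frobenius:
  assumes up: "uniform_preorder A R" and cw: "cartesian_with A R tp mt"
    and u: "maps_into u J I" and \<phi>: "fam_el (Pow A) I \<phi>" and \<psi>: "fam_el (Pow A) J \<psi>"
    and e: "is_fam_exists (Pow A) (DR A R) J I u \<psi> e" and m: "is_fam_meet (Pow A) (DR A R) I \<phi> e m"
    and m': "is_fam_meet (Pow A) (DR A R) J (\<phi> \<circ> u) \<psi> m'" and e': "is_fam_exists (Pow A) (DR A R) J I u m' e'"
  shows "fam_iso (DR A R) I m e'"
proof -
  note upD = up_D[OF up]
  have elE: "fam_el (Pow A) I e" using e unfolding is_fam_exists_def by blast
  have elm: "fam_el (Pow A) I m" using m unfolding is_fam_meet_def by blast
  have ele': "fam_el (Pow A) I e'" using e' unfolding is_fam_exists_def by blast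
  have elm': "fam_el (Pow A) J m'" using m' unfolding is_fam_meet_def by blast
  have mu: "is_fam_meet (Pow A) (DR A R) J (\<phi> \<circ> u) (e \<circ> u) (m \<circ> u)"
    by (rule meet_reidx[OF up cw u \<phi> elE m])
  have "fam_le (DR A R) J m' \<psi>" using m' unfolding is_fam_meet_def by blast
  then have "fam_le (DR A R) J m' (e \<circ> u)" using fam_trans[OF upD _ exists_le[OF upD e]] by blast
  moreover have "fam_le (DR A R) J m' (\<phi> \<circ> u)" using m' unfolding is_fam_meet_def by blast
  ultimately have "fam_le (DR A R) J m' (m \<circ> u)" using mu elm' unfolding is_fam_meet_def by blast
  then have d1: "fam_le (DR A R) I e' m" using e' elm unfolding is_fam_exists_def by blast
  let ?E = "ex0 J u \<psi>"
  have E: "is_fam_exists (Pow A) (DR A R) J I u \<psi> ?E" by (rule ex0_exists[OF up u \<psi>])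
  have elEE: "fam_el (Pow A) I ?E" using E unfolding is_fam_exists_def by blast
  have M1: "is_fam_meet (Pow A) (DR A R) I \<phi> e (meet0 mt \<phi> e)" by (rule meet0_meet[OF up cw \<phi> elE])
  have M2: "is_fam_meet (Pow A) (DR A R) I \<phi> ?E (meet0 mt \<phi> ?E)" by (rule meet0_meet[OF up cw \<phi> elEE])
  have M3: "is_fam_meet (Pow A) (DR A R) J (\<phi> \<circ> u) \<psi> (meet0 mt (\<phi> \<circ> u) \<psi>)"
    by (rule meet0_meet[OF up cw fam_el_reidx[OF u \<phi>] \<psi>])
  have elM3: "fam_el (Pow A) J (meet0 mt (\<phi> \<circ> u) \<psi>)" using M3 unfolding is_fam_meet_def by blast
  have E3: "is_fam_exists (Pow A) (DR A R) J I u (meet0 mt (\<phi> \<circ> u) \<psi>) (ex0 J u (meet0 mt (\<phi> \<circ> u) \<psi>))"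
    by (rule ex0_exists[OF up u elM3])
  have elE3: "fam_el (Pow A) I (ex0 J u (meet0 mt (\<phi> \<circ> u) \<psi>))" using E3 unfolding is_fam_exists_def by blast
  have c1: "fam_le (DR A R) I m (meet0 mt \<phi> e)" by (rule meet_le_meet[OF m M1])
  have c2: "fam_le (DR A R) I (meet0 mt \<phi> e) (meet0 mt \<phi> ?E)"
  proof -
    have "fam_le (DR A R) I (meet0 mt \<phi> e) e" using M1 unfolding is_fam_meet_def by blast
    then have "fam_le (DR A R) I (meet0 mt \<phi> e) ?E" using fam_trans[OF upD _ exists_uniq[OF upD e E]] by blast
    then show ?thesis using M1 M2 unfolding is_fam_meet_def by blast
  qed
  have c3: "fam_le (DR A R) I (meet0 mt \<phi> ?E) (ex0 J u (meet0 mt (\<phi> \<circ> u) \<psi>))"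
  proof (rule fam_le_sub[OF up])
    fix i assume i: "i \<in> I"
    have "meet0 mt \<phi> ?E i \<subseteq> ex0 J u (meet0 mt (\<phi> \<circ> u) \<psi>) i"
    proof
      fix x assume "x \<in> meet0 mt \<phi> ?E i"
      then obtain a c where ac: "x = mt (a,c)" "a \<in> \<phi> i" "c \<in> ?E i" unfolding meet0_def mtD_mem by blast
      then obtain j where j: "j \<in> J" "u j = i" "c \<in> \<psi> j" unfolding ex0_def by auto
      have "x \<in> meet0 mt (\<phi> \<circ> u) \<psi> j" unfolding meet0_def mtD_mem using ac j by auto
      then show "x \<in> ex0 J u (meet0 mt (\<phi> \<circ> u) \<psi>) i" unfolding ex0_def using j by blast
    qed
    moreover have "ex0 J u (meet0 mt (\<phi> \<circ> u) \<psi>) i \<subseteq> A" using elE3 i unfolding fam_el_def by blast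
    ultimately show "meet0 mt \<phi> ?E i \<subseteq> ex0 J u (meet0 mt (\<phi> \<circ> u) \<psi>) i \<and> ex0 J u (meet0 mt (\<phi> \<circ> u) \<psi>) i \<subseteq> A"
      by blast
  qed
  have c4: "fam_le (DR A R) I (ex0 J u (meet0 mt (\<phi> \<circ> u) \<psi>)) e'"
  proof -
    have "fam_le (DR A R) J (meet0 mt (\<phi> \<circ> u) \<psi>) m'" by (rule meet_le_meet[OF M3 m'])
    then have "fam_le (DR A R) J (meet0 mt (\<phi> \<circ> u) \<psi>) (e' \<circ> u)"
      using fam_trans[OF upD _ exists_le[OF upD e']] by blast
    then show ?thesis using E3 ele' unfolding is_fam_exists_def by blast
  qed
  have d2: "fam_le (DR A R) I m e'"
    using fam_trans[OF upD c1 fam_trans[OF upD c2 fam_trans[OF upD c3 c4]]] .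
  show ?thesis unfolding fam_iso_def using d1 d2 by blast
qed

lemma D_frame:
  assumes up: "uniform_preorder A R" and cw: "cartesian_with A R tp mt"
  shows "fam_indexed_frame (Pow A) (DR A R) TYPE('i) TYPE('j) TYPE('k) TYPE('p)"
  unfolding fam_indexed_frame_def
proof (intro conjI allI impI)
  fix I :: "'i set"
  show "\<exists>t. is_fam_top (Pow A) (DR A R) I t" using top0_top[OF up] by blast
  fix \<phi> \<psi> assume "fam_el (Pow A) I \<phi> \<and> fam_el (Pow A) I \<psi>"
  then show "\<exists>m. is_fam_meet (Pow A) (DR A R) I \<phi> \<psi> m" using meet0_meet[OF up cw] by blast
next
  fix I :: "'i set" and J :: "'j set" and u t
  assume "maps_into u J I" "is_fam_top (Pow A) (DR A R) I t"
  then show "is_fam_top (Pow A) (DR A R) J (t \<circ> u)" using top_reidx[OF up] by blast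
next
  fix I :: "'i set" and J :: "'j set" and u \<phi> \<psi> m
  assume "maps_into u J I" "fam_el (Pow A) I \<phi> \<and> fam_el (Pow A) I \<psi> \<and> is_fam_meet (Pow A) (DR A R) I \<phi> \<psi> m"
  then show "is_fam_meet (Pow A) (DR A R) J (\<phi> \<circ> u) (\<psi> \<circ> u) (m \<circ> u)" using meet_reidx[OF up cw] by blast
next
  fix I :: "'i set" and J :: "'j set" and u \<psi>
  assume "maps_into u J I \<and> fam_el (Pow A) J \<psi>"
  then show "\<exists>e. is_fam_exists (Pow A) (DR A R) J I u \<psi> e" using ex0_exists[OF up] by blast
next
  fix I :: "'i set" and J :: "'j set" and K :: "'k set" and P :: "'p set" and u v p q \<psi> e e'
  assume h: "maps_into u J I \<and> maps_into v K I \<and> maps_into p P J \<and> maps_into q P K \<and>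
        (\<forall>x\<in>P. u (p x) = v (q x)) \<and>
        bij_betw (\<lambda>x. (p x, q x)) P {(j, k). j \<in> J \<and> k \<in> K \<and> u j = v k}"
    and h2: "fam_el (Pow A) J \<psi> \<and> is_fam_exists (Pow A) (DR A R) J I u \<psi> e \<and>
            is_fam_exists (Pow A) (DR A R) P K q (\<psi> \<circ> p) e'"
  then show "fam_iso (DR A R) K (e \<circ> v) e'" using beck_chevalley[OF up] by blast
next
  fix I :: "'i set" and J :: "'j set" and u \<phi> \<psi> e m m' e'
  assume "maps_into u J I \<and> fam_el (Pow A) I \<phi> \<and> fam_el (Pow A) J \<psi> \<and>
        is_fam_exists (Pow A) (DR A R) J I u \<psi> e \<and> is_fam_meet (Pow A) (DR A R) I \<phi> e m \<and>
        is_fam_meet (Pow A) (DR A R) J (\<phi> \<circ> u) \<psi> m' \<and> is_fam_exists (Pow A) (DR A R) J I u m' e'"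
  then show "fam_iso (DR A R) I m e'" using frobenius[OF up cw] by blast
qed

theorem proposition5p3:
  fixes A :: "'a set" and R :: "('a \<times> 'a) set set"
  assumes "cartesian A R"
  shows "cartesian (Pow A) (DR A R) \<and>
         cartesian_mor A R (Pow A) (DR A R) (\<lambda>a. {a}) \<and>
         fam_indexed_frame (Pow A) (DR A R) TYPE('i) TYPE('j) TYPE('k) TYPE('p)"
proof -
  have up: "uniform_preorder A R" using assms unfolding cartesian_def by blast
  obtain tp mt where cw: "cartesian_with A R tp mt" using assms unfolding cartesian_def by blast
  show ?thesis using D_cartesian[OF assms] eta_cartesian[OF assms] D_frame[OF up cw] by blast
qed

end
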